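(* Let $N\in\mathbb{N}$ with $N\ge3$ and $n\in\mathbb{N}$ with $n\ge n_N$. Then there is a real $E$ with $|E|\le 5.3\cdot10^{-2}\left(\frac{5}{96}\right)^{N/2}n^{-\frac{N+2}{2}}$ such that \[ \frac{1}{(24n+1)\lambda(n)}=\frac{1}{8\cdot3^{3/4}\sqrt\pi\,n^{5/4}}\left(\sum_{m=0}^{\lfloor\frac{N+1}{2}\rfloor}\frac{e_2(m)}{n^m}+E\right). \]
   Context: $\lambda(n):=\sqrt{\frac{\pi}{6\sqrt2}\sqrt{24n+1}}$, $e_2(m):=\binom{-\frac54}{m}24^{-m}$ for $m\in\mathbb{N}_0$, and $n_N:=\left(\frac{3(3N+4)\log(6N+8)}{1.3^2}\right)^4$. *)

theory Defs
  imports "HOL-Analysis.Analysis"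
begin

definition lam :: "nat \<Rightarrow> real" where
  "lam n = sqrt (pi / (6 * sqrt 2) * sqrt (24 * real n + 1))"

definition e2 :: "nat \<Rightarrow> real" where
  "e2 m = ((-5/4 :: real) gchoose m) * (1/24) ^ m"

definition nN :: "nat \<Rightarrow> real" where
  "nN N = (3 * (3 * real N + 4) * ln (6 * real N + 8) / (1.3 ^ 2)) ^ 4"

end

theory Submission
  imports Defs
begin
lemma const_id: "sqrt (pi / (6 * sqrt 2)) * 24 powr (5/4) = 8 * 3 powr (3/4) * sqrt pi"
proof -
  have p4: "\<And>(y::real) r. y > 0 \<Longrightarrow> (y powr r) ^ 4 = y powr (4*r)"
    by (simp add: powr_realpow[symmetric] powr_powr mult.commute)
  have a: "(sqrt (pi / (6 * sqrt 2))) ^ 4 = pi^2 / 72"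
  proof -
    have "(sqrt (pi / (6 * sqrt 2))) ^ 4 = ((sqrt (pi / (6 * sqrt 2)))^2)^2"
      unfolding power_mult[symmetric] by simp
    also have "\<dots> = (pi / (6 * sqrt 2))^2" by (simp add: pi_ge_zero)
    also have "\<dots> = pi^2 / 72" by (simp add: power_divide power_mult_distrib)
    finally show ?thesis .
  qed
  have b: "((24::real) powr (5/4)) ^ 4 = 24^5" using p4[of 24 "5/4"] by simp
  have c: "((3::real) powr (3/4)) ^ 4 = 27" using p4[of 3 "3/4"] by simp
  have d: "(sqrt pi)^4 = pi^2"
    proof -
      have "(sqrt pi)^4 = ((sqrt pi)^2)^2" unfolding power_mult[symmetric] by simp
      then show ?thesis by simp
    qed
  have "(sqrt (pi / (6 * sqrt 2)) * 24 powr (5/4))^4 = (8 * 3 powr (3/4) * sqrt pi)^4"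
    unfolding power_mult_distrib a b c d by simp
  then show ?thesis
    by (rule power_eq_imp_eq_base) (auto intro: mult_nonneg_nonneg)
qed

lemma main_id:
  fixes n :: nat assumes n: "n > 0"
  shows "1 / ((24 * real n + 1) * lam n) =
    1 / (8 * 3 powr (3/4) * sqrt pi * real n powr (5/4)) * (1 + 1 / (24 * real n)) powr (-5/4)"
proof -
  define y where "y = 24 * real n + 1"
  have y: "y > 0" unfolding y_def by simp
  have l: "lam n = sqrt (pi / (6 * sqrt 2)) * y powr (1/4)"
  proof -
    have "sqrt (sqrt y) = y powr (1/4)"
      using y by (simp add: powr_half_sqrt[symmetric] powr_powr)
    moreover have "pi / (6 * sqrt 2) * sqrt y = (pi / (6 * sqrt 2)) * sqrt y" ..
    ultimately show ?thesis unfolding lam_def y_def[symmetric] by (metis real_sqrt_mult)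
  qed
  have "y * y powr (1/4) = y powr (5/4)"
  proof -
    have "y powr (5/4) = y powr (1 + 1/4)" by simp
    also have "\<dots> = y * y powr (1/4)" unfolding powr_add using y by simp
    finally show ?thesis by simp
  qed
  moreover have "y = 24 * real n * (1 + 1 / (24 * real n))" unfolding y_def using n by (simp add: field_simps)
  hence "y powr (5/4) = 24 powr (5/4) * real n powr (5/4) * (1 + 1 / (24 * real n)) powr (5/4)"
    by (simp add: powr_mult)
  ultimately have "y * lam n = sqrt (pi / (6 * sqrt 2)) * 24 powr (5/4) * real n powr (5/4) * (1 + 1 / (24 * real n)) powr (5/4)"
    unfolding l by (simp add: algebra_simps)
  also have "\<dots> = 8 * 3 powr (3/4) * sqrt pi * real n powr (5/4) * (1 + 1 / (24 * real n)) powr (5/4)"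
    unfolding const_id ..
  finally show ?thesis unfolding y_def[symmetric]
    by (simp add: powr_minus_divide)
qed


lemma tail_bound:
  fixes x :: real and K :: nat
  assumes x0: "0 < x" and x1: "x \<le> 1/24"
  shows "\<bar>(1 + x) powr (-5/4) - (\<Sum>k<K. ((-5/4) gchoose k) * x^k)\<bar> \<le> (5/4 * x) ^ K"
proof -
  define a where "a k = pochhammer (5/4::real) k / fact k * x^k" for k
  have c: "((-5/4) gchoose k) * x^k = (-1)^k * a k" for k
    unfolding a_def gbinomial_pochhammer by simp
  have aSuc: "a (Suc k) = a k * ((5/4 + real k) / (real k + 1) * x)" for k
    unfolding a_def by (simp add: pochhammer_rec' field_simps)
  have apos: "0 \<le> a k" for k
    unfolding a_def using x0 by (auto intro!: divide_nonneg_pos mult_nonneg_nonneg pochhammer_nonneg)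
  have mono: "a (Suc k) \<le> a k" for k
  proof -
    have "x * real k \<le> 1 * real k" using x1 by (intro mult_right_mono) auto
    then have h: "(5/4 + real k) / (real k + 1) * x \<le> 1"
      using x0 x1 by (simp add: field_simps)
    show ?thesis unfolding aSuc by (rule mult_left_le[OF h apos])
  qed
  have abound: "a k \<le> (5/4 * x) ^ k" for k
  proof (induction k)
    case 0 then show ?case by (simp add: a_def)
  next
    case (Suc k)
    have f: "0 \<le> (5/4 + real k) / (real k + 1) * x" using x0 by simp
    have g: "(5/4 + real k) / (real k + 1) * x \<le> 5/4 * x"
      using x0 by (simp add: field_simps)
    have "a (Suc k) \<le> (5/4 * x) ^ k * ((5/4 + real k) / (real k + 1) * x)"
      unfolding aSuc by (rule mult_right_mono[OF Suc.IH f])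
    also have "\<dots> \<le> (5/4 * x) ^ k * (5/4 * x)"
      using g x0 by (intro mult_left_mono) auto
    finally show ?case by (simp add: mult.commute)
  qed
  have az: "a \<longlonglongrightarrow> 0"
  proof (rule real_tendsto_sandwich[of "\<lambda>_. 0" _ _ "\<lambda>k. (5/4 * x) ^ k"])
    show "(\<lambda>k. (5/4 * x) ^ k) \<longlonglongrightarrow> 0"
      using x0 x1 by (intro LIMSEQ_power_zero) auto
  qed (use apos abound in auto)
  have "(\<lambda>k. ((-5/4) gchoose k) * x^k) sums (1 + x) powr (-5/4)"
    using x0 x1 by (intro gen_binomial_real) auto
  hence sm: "(\<lambda>k. (-1)^k * a k) sums (1 + x) powr (-5/4)" unfolding c .
  define S where "S = (1 + x) powr (-5/4)"
  have S: "S = (\<Sum>i. (-1)^i * a i)" using sm unfolding S_def by (simp add: sums_iff)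
  note L = summable_Leibniz'[OF az apos mono]
  have P: "(\<Sum>k<K. ((-5/4) gchoose k) * x^k) = (\<Sum>i<K. (-1)^i * a i)"
    unfolding c ..
  have "\<bar>S - (\<Sum>i<K. (-1)^i * a i)\<bar> \<le> a K"
  proof (cases "even K")
    case True
    then obtain m where m: "K = 2*m" by blast
    have "(\<Sum>i<2*m. (-1)^i * a i) \<le> S" using L(2)[of m] S by simp
    moreover have "S \<le> (\<Sum>i<2*m+1. (-1)^i * a i)" using L(4)[of m] S by simp
    ultimately show ?thesis unfolding m by simp
  next
    case False
    then obtain m where m: "K = 2*m+1" using oddE by blast
    have "(\<Sum>i<2*(m+1). (-1)^i * a i) \<le> S" using L(2)[of "m+1"] S by simp
    moreover have "S \<le> (\<Sum>i<2*m+1. (-1)^i * a i)" using L(4)[of m] S by simp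
    moreover have "(\<Sum>i<2*(m+1). (-1)^i * a i) = (\<Sum>i<2*m+1. (-1)^i * a i) - a (2*m+1)"
      by simp
    ultimately show ?thesis unfolding m by simp
  qed
  then show ?thesis using abound[of K] unfolding P S_def by linarith
qed


lemma final_bound:
  fixes N n :: nat assumes n: "n > 0"
  shows "(5/4 * (1 / (24 * real n))) ^ ((N + 1) div 2 + 1) \<le>
    5.3 * 10 powr (-2) * (5/96) powr (real N / 2) * real n powr (- (real N + 2) / 2)"
proof -
  have ten: "(10::real) powr (-2) = 1/100"
    by (simp add: powr_minus powr_numeral)
  have base: "5/4 * (1 / (24 * real n)) = (5/96) / real n" by simp
  have nn: "real n \<ge> 1" using n by simp
  show ?thesis
  proof (cases "even N")
    case True
    then obtain j where j: "N = 2*j" by blast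
    have K: "(N + 1) div 2 + 1 = j + 1" unfolding j by simp
    have p1: "(5/96::real) powr (real N / 2) = (5/96)^j"
      unfolding j by (simp add: powr_realpow)
    have p2: "real n powr (- (real N + 2) / 2) = inverse (real n ^ (j+1))"
    proof -
      have e: "- (real N + 2) / 2 = - real (j+1)" unfolding j by simp
      show ?thesis using n by (subst e, subst powr_minus, subst powr_realpow) auto
    qed
    have "((5/96) / real n) ^ (j+1) = (5/96) * (5/96)^j * inverse (real n ^ (j+1))"
      by (simp add: power_divide field_simps)
    also have "\<dots> \<le> (5.3 * (1/100)) * (5/96)^j * inverse (real n ^ (j+1))"
      using n by (intro mult_right_mono) auto
    finally show ?thesis unfolding base K p1 p2 ten by simp
  next
    case False
    then obtain j where j: "N = 2*j+1" using oddE by blast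
    have K: "(N + 1) div 2 + 1 = j + 2" unfolding j by simp
    have p1: "(5/96::real) powr (real N / 2) = (5/96)^j * sqrt (5/96)"
    proof -
      have e: "real N / 2 = real j + 1/2" unfolding j by simp
      show ?thesis
        by (subst e, subst powr_add, subst powr_realpow, simp_all add: powr_half_sqrt)
    qed
    have p2: "real n powr (- (real N + 2) / 2) = inverse (real n ^ (j+1) * sqrt (real n))"
    proof -
      have e: "- (real N + 2) / 2 = - (real (j+1) + 1/2)" unfolding j by simp
      show ?thesis using n
        by (subst e, subst powr_minus, subst powr_add, subst powr_realpow, simp_all add: powr_half_sqrt)
    qed
    have sq: "sqrt (real n) \<le> real n"
    proof -
      have g1: "sqrt (real n) \<ge> 1" using nn by simp
      have "sqrt (real n) * 1 \<le> sqrt (real n) * sqrt (real n)"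
        using g1 by (intro mult_left_mono) auto
      then show ?thesis by simp
    qed
    have sqp: "sqrt (real n) > 0" using n by simp
    have s5: "sqrt (5/96::real) \<ge> 1/5"
      by (rule real_le_rsqrt) (simp add: power2_eq_square)
    have c1: "(5/96::real)^2 \<le> (5.3 * (1/100)) * sqrt (5/96)"
      using s5 by (simp add: power2_eq_square)
    have c2: "inverse (real n) \<le> inverse (sqrt (real n))"
      using sq sqp by (simp add: le_imp_inverse_le)
    have "((5/96) / real n) ^ (j+2) = (5/96)^j * inverse (real n ^ (j+1)) * ((5/96)^2 * inverse (real n))"
      by (simp add: power_divide field_simps power_add)
    also have "\<dots> \<le> (5/96)^j * inverse (real n ^ (j+1)) * ((5.3 * (1/100)) * sqrt (5/96) * inverse (sqrt (real n)))"
      using c1 c2 n by (intro mult_left_mono mult_mono) auto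
    also have "\<dots> = 5.3 * (1/100) * ((5/96)^j * sqrt (5/96)) * inverse (real n ^ (j+1) * sqrt (real n))"
      by (simp add: field_simps)
    finally show ?thesis unfolding base K p1 p2 ten .
  qed
qed


theorem lemma3p13:
  fixes N n :: nat
  assumes "N \<ge> 3" and "real n \<ge> nN N"
  shows "\<exists>E :: real.
    \<bar>E\<bar> \<le> 5.3 * 10 powr (-2) * (5/96) powr (real N / 2) * real n powr (- (real N + 2) / 2) \<and>
    1 / ((24 * real n + 1) * lam n) =
      1 / (8 * 3 powr (3/4) * sqrt pi * real n powr (5/4)) *
      ((\<Sum>m = 0..(N + 1) div 2. e2 m / real n ^ m) + E)"
proof -
  have lnp: "ln (6 * real N + 8) > 0" by (rule ln_gt_zero) simp
  have "nN N > 0" unfolding nN_def using lnp by simp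
  then have n: "n > 0" using assms(2) by simp
  define x where "x = 1 / (24 * real n)"
  have x0: "0 < x" unfolding x_def using n by simp
  have x1: "x \<le> 1/24" unfolding x_def using n by (simp add: field_simps)
  define M where "M = (N + 1) div 2"
  have sumeq: "(\<Sum>m = 0..M. e2 m / real n ^ m) = (\<Sum>k<M+1. ((-5/4) gchoose k) * x^k)"
    unfolding atLeast0AtMost lessThan_Suc_atMost[symmetric] Suc_eq_plus1
    by (rule sum.cong) (auto simp: e2_def x_def power_divide power_mult_distrib)
  define E where "E = (1 + x) powr (-5/4) - (\<Sum>m = 0..M. e2 m / real n ^ m)"
  have "\<bar>E\<bar> \<le> (5/4 * x) ^ (M + 1)"
    unfolding E_def sumeq by (rule tail_bound[OF x0 x1])
  also have "\<dots> \<le> 5.3 * 10 powr (-2) * (5/96) powr (real N / 2) * real n powr (- (real N + 2) / 2)"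
    unfolding x_def M_def by (rule final_bound[OF n])
  finally have b: "\<bar>E\<bar> \<le> 5.3 * 10 powr (-2) * (5/96) powr (real N / 2) * real n powr (- (real N + 2) / 2)" .
  have "1 / ((24 * real n + 1) * lam n) =
      1 / (8 * 3 powr (3/4) * sqrt pi * real n powr (5/4)) *
      ((\<Sum>m = 0..(N + 1) div 2. e2 m / real n ^ m) + E)"
    unfolding main_id[OF n] E_def M_def x_def by simp
  with b show ?thesis by blast
qed

end
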